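(* For $(\varphi,\xi,\theta)\in[0,\pi/2]\times[0,\pi]\times[0,\pi/2]$ let $C_\theta=\cos\theta\,(|\uparrow\rangle\langle\uparrow|+|\downarrow\rangle\langle\downarrow|)+\sin\theta\,(|\uparrow\rangle\langle\downarrow|-|\downarrow\rangle\langle\uparrow|)$ and $\gamma_{\varphi,\xi}=\cos\varphi\,|\uparrow\rangle+\sin\varphi\,e^{i\xi}|\downarrow\rangle$. Then for every coin setup $(C,\gamma)$, with $C\in U(2)$ arbitrary and $\gamma\in\mathbb{C}^2$ an arbitrary unit vector, there exists $(\varphi,\xi,\theta)\in[0,\pi/2]\times[0,\pi]\times[0,\pi/2]$ such that $(C,\gamma)\sim_d(C_\theta,\gamma_{\varphi,\xi})$. That is, the map $(\varphi,\xi,\theta)\mapsto(C_\theta,\gamma_{\varphi,\xi})$ is surjective onto the set of distributional equivalence classes of all coin setups.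
   Context: Let $\mathcal{H}=\ell^2(\mathbb{Z})\otimes\mathbb{C}^2$, with position basis $\{|j\rangle: j\in\mathbb{Z}\}$ of $\ell^2(\mathbb{Z})$ and orthonormal basis $\{|\uparrow\rangle,|\downarrow\rangle\}$ of $\mathbb{C}^2$. A (quantum) coin is any $C\in U(2)$. The conditional translation is $T=\sum_{j\in\mathbb{Z}}|j+1\rangle\langle j|\otimes|\uparrow\rangle\langle\uparrow|+\sum_{j\in\mathbb{Z}}|j-1\rangle\langle j|\otimes|\downarrow\rangle\langle\downarrow|$ and the walk operator is $W(C)=T(\mathbb{1}\otimes C)$. A coin setup is a pair $(C,\gamma)$ with $C\in U(2)$ and $\gamma\in\mathbb{C}^2$ a unit vector (the initial coin state). Its induced distributions are $p_{(C,\gamma)}(j,n)=\langle\psi_n|(|j\rangle\langle j|\otimes\mathbb{1})|\psi_n\rangle$ with $\psi_n=W(C)^n(|0\rangle\otimes\gamma)$, for $j\in\mathbb{Z}$, $n\in\mathbb{N}$. Two coin setups $\mathcal{C}_1,\mathcal{C}_2$ are distributionally equivalent, written $\mathcal{C}_1\sim_d\mathcal{C}_2$, if $p_{\mathcal{C}_1}(j,n)=p_{\mathcal{C}_2}(j,n)$ for all $j\in\mathbb{Z}$, $n\in\mathbb{N}$. *)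

theory Defs
  imports "HOL-Analysis.Analysis"
begin

text \<open>Coin space C^2 is modelled as complex^2; index 1 is the spin-up basis
vector, index 2 the spin-down basis vector. A 2x2 matrix C :: complex^2^2 has
entries C$i$j = <i|C|j>. A state of H = l^2(Z) (x) C^2 is a function int => complex^2.\<close>

definition adjoint2 :: "complex^2^2 \<Rightarrow> complex^2^2" where
  "adjoint2 C = (\<chi> i j. cnj (C $ j $ i))"

definition unitary2 :: "complex^2^2 \<Rightarrow> bool" where
  "unitary2 C \<longleftrightarrow> C ** adjoint2 C = mat 1 \<and> adjoint2 C ** C = mat 1"

definition walk_op :: "complex^2^2 \<Rightarrow> (int \<Rightarrow> complex^2) \<Rightarrow> (int \<Rightarrow> complex^2)" where
  "walk_op C \<psi> = (\<lambda>j. \<chi> s. if s = 1 then (C *v \<psi> (j - 1)) $ 1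
                               else (C *v \<psi> (j + 1)) $ 2)"

definition initial_state :: "complex^2 \<Rightarrow> (int \<Rightarrow> complex^2)" where
  "initial_state \<gamma> = (\<lambda>j. if j = 0 then \<gamma> else 0)"

definition walk_state :: "complex^2^2 \<Rightarrow> complex^2 \<Rightarrow> nat \<Rightarrow> (int \<Rightarrow> complex^2)" where
  "walk_state C \<gamma> n = (walk_op C ^^ n) (initial_state \<gamma>)"

text \<open>p_(C,gamma)(j,n) = <psi_n| (|j><j| (x) 1) |psi_n> = ||psi_n(j)||^2.\<close>
definition induced_dist :: "(complex^2^2) \<times> (complex^2) \<Rightarrow> int \<Rightarrow> nat \<Rightarrow> real" where
  "induced_dist S j n = (norm (walk_state (fst S) (snd S) n j))\<^sup>2"

definition dist_equiv :: "(complex^2^2) \<times> (complex^2) \<Rightarrow> (complex^2^2) \<times> (complex^2) \<Rightarrow> bool" where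
  "dist_equiv S1 S2 \<longleftrightarrow> (\<forall>j n. induced_dist S1 j n = induced_dist S2 j n)"

definition coin_theta :: "real \<Rightarrow> complex^2^2" where
  "coin_theta \<theta> = (\<chi> i j. if i = j then complex_of_real (cos \<theta>)
                       else if i = 1 then complex_of_real (sin \<theta>)
                       else - complex_of_real (sin \<theta>))"

definition gamma_phi_xi :: "real \<Rightarrow> real \<Rightarrow> complex^2" where
  "gamma_phi_xi \<phi> \<xi> = (\<chi> s. if s = 1 then complex_of_real (cos \<phi>)
                        else complex_of_real (sin \<phi>) * exp (\<i> * complex_of_real \<xi>))"

end

theory Submission imports Defs begin

lemma mv_comp: "((C::complex^2^2) *v x) $ i = C$i$1 * x$1 + C$i$2 * x$2"
  by (simp add: matrix_vector_mult_def sum_2)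

lemma walk_comp1: "walk_op C \<psi> j $ 1 = C$1$1 * \<psi> (j-1) $ 1 + C$1$2 * \<psi> (j-1) $ 2"
  by (simp add: walk_op_def mv_comp)
lemma walk_comp2: "walk_op C \<psi> j $ 2 = C$2$1 * \<psi> (j+1) $ 1 + C$2$2 * \<psi> (j+1) $ 2"
  by (simp add: walk_op_def mv_comp)

lemma walk_state_Suc: "walk_state C \<gamma> (Suc n) = walk_op C (walk_state C \<gamma> n)"
  by (simp add: walk_state_def)

lemma walk_state_0: "walk_state C \<gamma> 0 = initial_state \<gamma>"
  by (simp add: walk_state_def)

lemma gauge:
  fixes C C' :: "complex^2^2" and e :: "complex^2"
  assumes z: "z \<noteq> 0"
    and h1: "\<And>k. C$1$k * e$k = u*z*e$1 * C'$1$k"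
    and h2: "\<And>k. C$2$k * e$k * z = u*e$2 * C'$2$k"
  shows "walk_state C (\<chi> k. e$k * \<gamma>$k) n j $ s = u^n * z powi j * (e$s * walk_state C' \<gamma> n j $ s)"
proof (induction n arbitrary: j s)
  case 0
  then show ?case by (simp add: walk_state_0 initial_state_def)
next
  case (Suc n)
  have zz1: "z powi (j-1) * z = z powi j" using z by (simp add: power_int_diff)
  have zz2: "z powi (j+1) = z powi j * z" using z by (simp add: power_int_add)
  consider "s = 1" | "s = 2" using exhaust_2 by blast
  then show ?case
  proof cases
    case 1
    have "walk_state C (\<chi> k. e$k * \<gamma>$k) (Suc n) j $ s
      = u^n * z powi (j-1) * ((C$1$1 * e$1) * walk_state C' \<gamma> n (j-1) $ 1 + (C$1$2 * e$2) * walk_state C' \<gamma> n (j-1) $ 2)"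
      using 1 by (simp add: walk_state_Suc walk_comp1 Suc.IH) (simp add: algebra_simps)
    also have "\<dots> = u^n * z powi (j-1) * ((u*z*e$1 * C'$1$1) * walk_state C' \<gamma> n (j-1) $ 1 + (u*z*e$1 * C'$1$2) * walk_state C' \<gamma> n (j-1) $ 2)"
      by (simp only: h1)
    also have "\<dots> = u^n * (z powi (j-1) * z) * u * e$1 * (C'$1$1 * walk_state C' \<gamma> n (j-1) $ 1 + C'$1$2 * walk_state C' \<gamma> n (j-1) $ 2)"
      by (simp add: algebra_simps)
    also have "\<dots> = u^(Suc n) * z powi j * (e$s * walk_state C' \<gamma> (Suc n) j $ s)"
      using 1 by (simp add: walk_state_Suc walk_comp1 algebra_simps flip: zz1)
    finally show ?thesis .
  next
    case 2
    have "walk_state C (\<chi> k. e$k * \<gamma>$k) (Suc n) j $ s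
      = u^n * z powi j * ((C$2$1 * e$1 * z) * walk_state C' \<gamma> n (j+1) $ 1 + (C$2$2 * e$2 * z) * walk_state C' \<gamma> n (j+1) $ 2)"
      using 2 by (simp add: walk_state_Suc walk_comp2 Suc.IH zz2) (simp add: algebra_simps)
    also have "\<dots> = u^n * z powi j * ((u*e$2 * C'$2$1) * walk_state C' \<gamma> n (j+1) $ 1 + (u*e$2 * C'$2$2) * walk_state C' \<gamma> n (j+1) $ 2)"
      by (simp only: h2)
    also have "\<dots> = u^n * z powi j * u * e$2 * (C'$2$1 * walk_state C' \<gamma> n (j+1) $ 1 + C'$2$2 * walk_state C' \<gamma> n (j+1) $ 2)"
      by (simp add: algebra_simps)
    also have "\<dots> = u^(Suc n) * z powi j * (e$s * walk_state C' \<gamma> (Suc n) j $ s)"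
      using 2 by (simp add: walk_state_Suc walk_comp2 algebra_simps)
    finally show ?thesis .
  qed
qed

lemma norm2_eq: "norm (x::complex^2) = norm (y::complex^2) \<longleftrightarrow> True" if "norm (x$1) = norm (y$1)" "norm (x$2) = norm (y$2)"
  using that by (simp add: norm_vec_def L2_set_def sum_2)

lemma gauge_equiv:
  fixes C C' :: "complex^2^2" and e :: "complex^2"
  assumes z: "norm z = 1" and u: "norm u = 1" and e1: "norm (e$1) = 1" and e2: "norm (e$2) = 1"
    and h1: "\<And>k. C$1$k * e$k = u*z*e$1 * C'$1$k"
    and h2: "\<And>k. C$2$k * e$k * z = u*e$2 * C'$2$k"
  shows "dist_equiv (C, \<chi> k. e$k * \<gamma>$k) (C', \<gamma>)"
  unfolding dist_equiv_def induced_dist_def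
proof (intro allI)
  fix j n
  have z0: "z \<noteq> 0" using z by auto
  have nz: "norm (z powi j) = 1" using z by (simp add: norm_power_int)
  have "norm (walk_state C (\<chi> k. e$k * \<gamma>$k) n j) = norm (walk_state C' \<gamma> n j)"
    apply (rule norm2_eq[THEN iffD2])
    by (simp_all add: gauge[OF z0 h1 h2] norm_mult norm_power u nz e1 e2)
  then show "(norm (walk_state (fst (C, \<chi> k. e$k * \<gamma>$k)) (snd (C, \<chi> k. e$k * \<gamma>$k)) n j))\<^sup>2 =
         (norm (walk_state (fst (C', \<gamma>)) (snd (C', \<gamma>)) n j))\<^sup>2" by simp
qed

lemma conj_walk:
  "walk_state (\<chi> i k. cnj (C$i$k)) (\<chi> s. cnj (\<gamma>$s)) n j $ s = cnj (walk_state C \<gamma> n j $ s)"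
proof (induction n arbitrary: j s)
  case 0
  then show ?case by (simp add: walk_state_0 initial_state_def)
next
  case (Suc n)
  consider "s = 1" | "s = 2" using exhaust_2 by blast
  then show ?case by cases (simp_all add: walk_state_Suc walk_comp1 walk_comp2 Suc.IH)
qed

lemma conj_equiv:
  "dist_equiv (\<chi> i k. cnj (C$i$k), \<chi> s. cnj (\<gamma>$s)) (C, \<gamma>)"
  unfolding dist_equiv_def induced_dist_def
proof (intro allI)
  fix j n
  have "norm (walk_state (\<chi> i k. cnj (C$i$k)) (\<chi> s. cnj (\<gamma>$s)) n j) = norm (walk_state C \<gamma> n j)"
    by (rule norm2_eq[THEN iffD2]) (simp_all add: conj_walk)
  then show "(norm (walk_state (fst (\<chi> i k. cnj (C$i$k), \<chi> s. cnj (\<gamma>$s))) (snd (\<chi> i k. cnj (C$i$k), \<chi> s. cnj (\<gamma>$s))) n j))\<^sup>2 =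
         (norm (walk_state (fst (C, \<gamma>)) (snd (C, \<gamma>)) n j))\<^sup>2" by simp
qed


lemma dist_equiv_trans: "dist_equiv A B \<Longrightarrow> dist_equiv B D \<Longrightarrow> dist_equiv A D"
  by (simp add: dist_equiv_def)

lemma arccos_facts:
  fixes x y :: real
  assumes "x \<ge> 0" "y \<ge> 0" "x^2 + y^2 = 1"
  shows "cos (arccos x) = x" "sin (arccos x) = y" "arccos x \<in> {0..pi/2}"
proof -
  have "x^2 \<le> 1" using assms(3) zero_le_power2[of y] by linarith
  then have x1: "x \<le> 1" using power2_le_imp_le[of x 1] by simp
  show "cos (arccos x) = x" using assms x1 by (simp add: cos_arccos)
  have "sin (arccos x) = sqrt (1 - x^2)" using assms x1 by (simp add: sin_arccos)
  also have "\<dots> = y" by (rule real_sqrt_unique) (use assms in auto)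
  finally show "sin (arccos x) = y" .
  have "arccos x \<le> pi/2" using assms(1) x1 by (rule arccos_le_pi2)
  moreover have "0 \<le> arccos x" using assms(1) x1 by (intro arccos_lbound) auto
  ultimately show "arccos x \<in> {0..pi/2}" by simp
qed

theorem theorem3:
  fixes C :: "complex^2^2" and \<gamma> :: "complex^2"
  assumes "unitary2 C" and "norm \<gamma> = 1"
  shows "\<exists>\<phi> \<xi> \<theta>. \<phi> \<in> {0..pi/2} \<and> \<xi> \<in> {0..pi} \<and> \<theta> \<in> {0..pi/2} \<and>
           dist_equiv (C, \<gamma>) (coin_theta \<theta>, gamma_phi_xi \<phi> \<xi>)"
proof -
  define a where "a = C$1$1"
  define b where "b = C$1$2"
  define c where "c = C$2$1"
  define d where "d = C$2$2"
  define \<Delta> where "\<Delta> = a*d - b*c"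
  have U1: "C ** adjoint2 C = mat 1" and U2: "adjoint2 C ** C = mat 1"
    using assms(1) by (auto simp: unitary2_def)
  have f1: "a*cnj a + b*cnj b = 1"
    using arg_cong[OF U1, of "\<lambda>M. M$1$1"] by (simp add: matrix_matrix_mult_def sum_2 adjoint2_def mat_def a_def b_def)
  have f2: "a*cnj c + b*cnj d = 0"
    using arg_cong[OF U1, of "\<lambda>M. M$1$2"] by (simp add: matrix_matrix_mult_def sum_2 adjoint2_def mat_def a_def b_def c_def d_def)
  have f5: "c*cnj c + d*cnj d = 1"
    using arg_cong[OF U1, of "\<lambda>M. M$2$2"] by (simp add: matrix_matrix_mult_def sum_2 adjoint2_def mat_def c_def d_def)
  have f3: "cnj a * a + cnj c * c = 1"
    using arg_cong[OF U2, of "\<lambda>M. M$1$1"] by (simp add: matrix_matrix_mult_def sum_2 adjoint2_def mat_def a_def c_def)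
  have f4: "cnj a * b + cnj c * d = 0"
    using arg_cong[OF U2, of "\<lambda>M. M$1$2"] by (simp add: matrix_matrix_mult_def sum_2 adjoint2_def mat_def a_def b_def c_def d_def)
  have f2': "cnj a * c + cnj b * d = 0"
    using arg_cong[OF f2, of cnj] by (simp add: mult.commute)
  have dD: "d = \<Delta> * cnj a"
  proof -
    have "\<Delta> * cnj a = d*(cnj a * a + cnj c * c) - c*(cnj a * b + cnj c * d)"
      by (simp add: \<Delta>_def algebra_simps)
    then show ?thesis using f3 f4 by simp
  qed
  have cD: "c = - \<Delta> * cnj b"
  proof -
    have "- \<Delta> * cnj b = c*(a*cnj a + b*cnj b) - a*(cnj a * c + cnj b * d)"
      by (simp add: \<Delta>_def algebra_simps)
    then show ?thesis using f1 f2' by simp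
  qed
  have "\<Delta> * cnj \<Delta> = 1"
  proof -
    have "c*cnj c + d*cnj d = (\<Delta> * cnj \<Delta>) * (a*cnj a + b*cnj b)"
      by (simp add: cD dD algebra_simps)
    then show ?thesis using f1 f5 by simp
  qed
  then have "complex_of_real ((norm \<Delta>)^2) = 1" by (simp only: complex_norm_square)
  then have "(norm \<Delta>)^2 = 1" by (metis of_real_eq_1_iff)
  then have nD: "norm \<Delta> = 1" using norm_ge_zero[of \<Delta>] by (auto simp: power2_eq_1_iff)
  have ab: "(norm a)^2 + (norm b)^2 = 1"
  proof -
    have "complex_of_real ((norm a)^2 + (norm b)^2) = 1"
      using f1 by (simp only: of_real_add complex_norm_square)
    then show ?thesis by (metis of_real_eq_1_iff)
  qed
  define \<theta> where "\<theta> = arccos (norm a)"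
  note th = arccos_facts[OF norm_ge_zero norm_ge_zero ab, folded \<theta>_def]
  define u where "u = csqrt \<Delta>"
  have u2: "u^2 = \<Delta>" by (simp add: u_def)
  have nu: "norm u = 1" using nD by (simp add: u_def)
  have u0: "u \<noteq> 0" using nu by auto
  define z where "z = (if a = 0 then 1 else a / (u * of_real (norm a)))"
  have nz: "norm z = 1" using nu by (simp add: z_def norm_mult norm_divide)
  have za: "u * z * of_real (norm a) = a"
    using u0 by (simp add: z_def)
  define e2 where "e2 = (if b = 0 then 1 else u * z * of_real (norm b) / b)"
  have ne2: "norm e2 = 1" using nu nz by (simp add: e2_def norm_mult norm_divide)
  have be2: "b * e2 = u * z * of_real (norm b)"
    by (simp add: e2_def)
  have dz: "d * z = u * of_real (norm a)"
  proof (cases "a = 0")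
    case True then show ?thesis by (simp add: dD)
  next
    case False
    have "d * z = u^2 * (cnj a * a) / (u * of_real (norm a))"
      using False by (simp add: dD u2 z_def)
    also have "\<dots> = u * of_real (norm a)"
      using False u0 by (simp add: complex_norm_square[symmetric] mult.commute power2_eq_square)
    finally show ?thesis .
  qed
  have cz: "c * z = - u * e2 * of_real (norm b)"
  proof (cases "b = 0")
    case True then show ?thesis by (simp add: cD)
  next
    case False
    have "c * z = - (u^2 * (cnj b * b) * z / b)"
      using False by (simp add: cD u2)
    also have "\<dots> = - u * e2 * of_real (norm b)"
      using False u0 by (simp add: complex_norm_square[symmetric] e2_def power2_eq_square mult.commute)
    finally show ?thesis .
  qed
  define C' where "C' = coin_theta \<theta>"
  have C'11: "C'$1$1 = of_real (norm a)" and C'12: "C'$1$2 = of_real (norm b)"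
    and C'21: "C'$2$1 = - of_real (norm b)" and C'22: "C'$2$2 = of_real (norm a)"
    by (simp_all add: C'_def coin_theta_def th)
  define \<alpha> where "\<alpha> = \<gamma>$1"
  define \<beta> where "\<beta> = \<gamma>$2 / e2"
  have e20: "e2 \<noteq> 0" using ne2 by auto
  have nab: "(norm \<alpha>)^2 + (norm \<beta>)^2 = 1"
  proof -
    have "sqrt ((norm (\<gamma>$1))^2 + (norm (\<gamma>$2))^2) = 1"
      using assms(2) by (simp add: norm_vec_def L2_set_def sum_2)
    then show ?thesis using ne2 by (simp add: \<alpha>_def \<beta>_def norm_divide)
  qed
  define \<phi> where "\<phi> = arccos (norm \<alpha>)"
  note ph = arccos_facts[OF norm_ge_zero norm_ge_zero nab, folded \<phi>_def]
  define \<omega> where "\<omega> = (if \<alpha> = 0 then 1 else \<alpha> / of_real (norm \<alpha>))"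
  have n\<omega>: "norm \<omega> = 1" by (simp add: \<omega>_def norm_divide)
  have \<omega>0: "\<omega> \<noteq> 0" using n\<omega> by auto
  have \<omega>\<alpha>: "\<omega> * of_real (norm \<alpha>) = \<alpha>" by (simp add: \<omega>_def)
  define w where "w = \<beta> / \<omega>"
  define \<xi>0 where "\<xi>0 = Arg w"
  have wrep: "of_real (norm \<beta>) * exp (\<i> * of_real \<xi>0) = w"
  proof (cases "w = 0")
    case True then show ?thesis using \<omega>0 by (simp add: w_def)
  next
    case False
    then show ?thesis using Arg_eq[OF False] n\<omega> by (simp add: \<xi>0_def w_def norm_divide)
  qed
  define e where "e = (\<chi> k::2. if k = 1 then \<omega> else \<omega> * e2)"
  define g where "g = gamma_phi_xi \<phi> \<xi>0"
  have g1: "g$1 = of_real (norm \<alpha>)" and g2: "g$2 = of_real (norm \<beta>) * exp (\<i> * of_real \<xi>0)"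
    by (simp_all add: g_def gamma_phi_xi_def ph)
  have \<gamma>eq: "\<gamma> = (\<chi> k. e$k * g$k)"
  proof -
    have "\<gamma>$1 = e$1 * g$1" using \<omega>\<alpha> by (simp add: e_def g1 \<alpha>_def)
    moreover have "\<gamma>$2 = e$2 * g$2"
    proof -
      have "e$2 * g$2 = \<omega> * e2 * w" by (simp add: e_def g2 wrep)
      also have "\<dots> = \<gamma>$2" using e20 \<omega>0 by (simp add: w_def \<beta>_def)
      finally show ?thesis by simp
    qed
    ultimately show ?thesis by (simp add: vec_eq_iff forall_2)
  qed
  have h1: "C$1$k * e$k = u*z*e$1 * C'$1$k" for k
  proof -
    consider "k = 1" | "k = 2" using exhaust_2 by blast
    then show ?thesis
    proof cases
      case 1
      have "C$1$1 * e$1 = \<omega> * a" by (simp add: e_def a_def)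
      also have "\<dots> = \<omega> * (u * z * of_real (norm a))" by (simp only: za)
      also have "\<dots> = u*z*e$1 * C'$1$1" by (simp add: e_def C'11)
      finally show ?thesis using 1 by simp
    next
      case 2
      have "C$1$2 * e$2 = \<omega> * (b * e2)" by (simp add: e_def b_def)
      then show ?thesis using 2 by (simp add: be2 e_def C'12, (simp add: algebra_simps)?)
    qed
  qed
  have h2: "C$2$k * e$k * z = u*e$2 * C'$2$k" for k
  proof -
    consider "k = 1" | "k = 2" using exhaust_2 by blast
    then show ?thesis
    proof cases
      case 1
      have "C$2$1 * e$1 * z = \<omega> * (c * z)" by (simp add: e_def c_def)
      then show ?thesis using 1 by (simp add: cz e_def C'21, (simp add: algebra_simps)?)
    next
      case 2
      have "C$2$2 * e$2 * z = \<omega> * e2 * (d * z)" by (simp add: e_def d_def algebra_simps)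
      then show ?thesis using 2 by (simp add: dz e_def C'22, (simp add: algebra_simps)?)
    qed
  qed
  have ne: "norm (e$1) = 1" "norm (e$2) = 1" using n\<omega> ne2 by (simp_all add: e_def norm_mult)
  have E0: "dist_equiv (C, \<gamma>) (C', g)"
    unfolding \<gamma>eq by (rule gauge_equiv[OF nz nu ne h1 h2])
  show ?thesis
  proof (cases "\<xi>0 \<ge> 0")
    case True
    have "\<xi>0 \<in> {0..pi}" using True Arg_le_pi[of w] by (simp add: \<xi>0_def)
    then show ?thesis using E0 ph(3) th(3) unfolding C'_def g_def
      by (intro exI[of _ \<phi>] exI[of _ \<xi>0] exI[of _ \<theta>] conjI)
  next
    case False
    have cC: "(\<chi> i k. cnj (C'$i$k)) = C'"
      by (simp add: vec_eq_iff C'_def coin_theta_def)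
    have cg: "(\<chi> s. cnj (gamma_phi_xi \<phi> (- \<xi>0) $ s)) = g"
      by (simp add: vec_eq_iff g_def gamma_phi_xi_def exp_cnj)
    have "dist_equiv (C', g) (C', gamma_phi_xi \<phi> (- \<xi>0))"
      using conj_equiv[of C' "gamma_phi_xi \<phi> (- \<xi>0)"] by (simp only: cC cg)
    then have "dist_equiv (C, \<gamma>) (coin_theta \<theta>, gamma_phi_xi \<phi> (- \<xi>0))"
      using E0 dist_equiv_trans C'_def by blast
    moreover have "- \<xi>0 \<in> {0..pi}" using False mpi_less_Arg[of w] by (simp add: \<xi>0_def)
    ultimately show ?thesis using ph(3) th(3)
      by (intro exI[of _ \<phi>] exI[of _ "- \<xi>0"] exI[of _ \<theta>] conjI)
  qed
qed

end
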